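(* Consider a regulator with opening degree $o\in[0,1]$ ($o=1$: fully open, "open mode"; $o=0$: fully closed, "closed mode"), whose operation point is given by continuous functions $o\mapsto (p_\ell(o),p_r(o),q(o))\in\mathbb{R}^3$ such that $p_\ell$ is nonincreasing in $o$, $p_r$ is nondecreasing in $o$, and $q$ is nondecreasing in $o$. Let the six target values $\underline{p}_\ell,\overline{p}_\ell,\underline{p}_r,\overline{p}_r,\underline{q},\overline{q}\in[0,\infty]$ be given (with priorities, directions and violation rules as in the context), and assume that $\underline{q}$ is violated at every opening degree (e.g. $\underline{q}=\infty$). Let $o^*\in[0,1]$ be the current opening degree and let $\rho$ be a pushing target value at $o^*$, with direction $d(\rho)$. Assume the regulator is perfectly adjusted at $o^*$ in the following sense: either ($d(\rho)$ = opening and $o^*=1$), or ($d(\rho)$ = closing and $o^*=0$), or for every $o'\neq o^*$ lying in the direction $d(\rho)$ from $o^*$ (i.e. $o'\in(o^*,1]$ if $d(\rho)$ = opening, $o'\in[0,o^* )$ if $d(\rho)$ = closing) there is a target value $\tau$ with $\pi(\tau)>\pi(\rho)$ that is violated at the operation point $(p_\ell(o'),p_r(o'),q(o'))$. Then at least one of the following holds: 1) there exists a target value $\tau$ (a "stable" target value) with $\pi(\tau)>\pi(\rho)$ and $d(\tau)\neq d(\rho)$ whose value equals its associated quantity at $o^*$ (e.g. $\underline{p}_\ell=p_\ell(o^* )$ if $\tau=\underline{p}_\ell$); 2) the regulator is fully open ($o^*=1$) and $\rho$ is an opening target value; 3) the regulator is fully closed ($o^*=0$) and $\rho$ is a closing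 target value.
   Context: Target values, their associated quantity, bound type, priority $\pi$ and direction $d$ (the direction in which the regulator changes its opening degree when the target value is violated): - $\underline{p}_\ell$ (minimal left pressure): lower bound $\underline{p}_\ell\le p_\ell$, $\pi=4$, closing; - $\overline{p}_r$ (maximal right pressure): upper bound $\overline{p}_r\ge p_r$, $\pi=4$, closing; - $\overline{p}_\ell$ (maximal left pressure): upper bound $\overline{p}_\ell\ge p_\ell$, $\pi=3$, opening; - $\underline{p}_r$ (minimal right pressure): lower bound $\underline{p}_r\le p_r$, $\pi=3$, opening; - $\overline{q}$ (maximal flow): upper bound $\overline{q}\ge q$, $\pi=2$, closing; - $\underline{q}$ (minimal flow): lower bound $\underline{q}\le q$, $\pi=1$, opening. A target value is satisfied at an operation point $(p_\ell,p_r,q)$ if its imposed bound holds and violated otherwise (a lower bound $\tau\le x$ is violated iff $x<\tau$; an upper bound $\tau\ge x$ is violated iff $x>\tau$). Closing means decreasing $o$, opening means increasing $o$. A pushing target value at $o^*$ is a target value that is violated at $(p_\ell(o^* ),p_r(o^* ),q(o^* ))$ and has maximal priority $\pi$ among all violated target values there (all violated target values of maximal priority have the same direction, since equal priorities only occur for equal directions). The setting models the "perfect control" assumption: the regulator reacts immediately and with perfect precision to target values according to the priorities, so the opening degree cannot be changed in the pushing direction without violating a higher-priority target value. The regulator is assumed not to be closed by its built-in check valve. *)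

theory Defs
  imports "HOL-Analysis.Analysis" "HOL-Library.Extended_Real"
begin

datatype target = PlMin | PrMax | PlMax | PrMin | QMax | QMin

datatype direction = Opening | Closing

datatype bound = Lower | Upper

fun prio :: "target \<Rightarrow> nat" where
  "prio PlMin = 4" | "prio PrMax = 4" | "prio PlMax = 3"
| "prio PrMin = 3" | "prio QMax = 2" | "prio QMin = 1"

fun dir :: "target \<Rightarrow> direction" where
  "dir PlMin = Closing" | "dir PrMax = Closing" | "dir PlMax = Opening"
| "dir PrMin = Opening" | "dir QMax = Closing" | "dir QMin = Opening"

fun bnd :: "target \<Rightarrow> bound" where
  "bnd PlMin = Lower" | "bnd PrMax = Upper" | "bnd PlMax = Upper"
| "bnd PrMin = Lower" | "bnd QMax = Upper" | "bnd QMin = Lower"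

fun qty :: "target \<Rightarrow> real \<times> real \<times> real \<Rightarrow> real" where
  "qty PlMin (pl, pr, q) = pl" | "qty PlMax (pl, pr, q) = pl"
| "qty PrMin (pl, pr, q) = pr" | "qty PrMax (pl, pr, q) = pr"
| "qty QMin (pl, pr, q) = q" | "qty QMax (pl, pr, q) = q"

definition violated :: "(target \<Rightarrow> ereal) \<Rightarrow> target \<Rightarrow> real \<times> real \<times> real \<Rightarrow> bool" where
  "violated T t x = (case bnd t of
      Lower \<Rightarrow> ereal (qty t x) < T t
    | Upper \<Rightarrow> ereal (qty t x) > T t)"

definition pushing :: "(target \<Rightarrow> ereal) \<Rightarrow> target \<Rightarrow> real \<times> real \<times> real \<Rightarrow> bool" where
  "pushing T rho x = (violated T rho x \<and> (\<forall>t. violated T t x \<longrightarrow> prio t \<le> prio rho))"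

end

theory Submission
  imports Defs
begin

lemma ev_lower:
  fixes f :: "real \<Rightarrow> real"
  assumes "(f \<longlongrightarrow> a) F" "T \<noteq> ereal a" "\<not> (ereal a < T)" "0 \<le> T"
  shows "eventually (\<lambda>s. \<not> ereal (f s) < T) F"
proof -
  have lt: "T < ereal a" using assms by auto
  then obtain c where c: "T = ereal c" using assms(4)
    by (cases T) auto
  with lt have "c < a" by simp
  from order_tendstoD(1)[OF assms(1) this] show ?thesis
    by eventually_elim (auto simp: c)
qed

lemma ev_upper:
  fixes f :: "real \<Rightarrow> real"
  assumes "(f \<longlongrightarrow> a) F" "T \<noteq> ereal a" "\<not> (ereal a > T)"
  shows "eventually (\<lambda>s. \<not> ereal (f s) > T) F"
proof (cases T)
  case (real c)
  with assms have "a < c" by auto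
  from order_tendstoD(2)[OF assms(1) this] show ?thesis
    by eventually_elim (auto simp: real)
next
  case PInf then show ?thesis by simp
next
  case MInf then show ?thesis using assms by simp
qed

lemma core:
  fixes pl pr q :: "real \<Rightarrow> real" and T :: "target \<Rightarrow> ereal"
    and ostar :: real and rho :: target and F D
  assumes F: "F \<noteq> bot"
    and tpl: "(pl \<longlongrightarrow> pl ostar) F" and tpr: "(pr \<longlongrightarrow> pr ostar) F"
    and tq: "(q \<longlongrightarrow> q ostar) F"
    and evD: "eventually (\<lambda>s. 0 \<le> s \<and> s \<le> 1 \<and> D s) F"
    and Ddir: "\<And>s. D s \<Longrightarrow> (dir rho = Opening \<longrightarrow> ostar \<le> s) \<and> (dir rho = Closing \<longrightarrow> s \<le> ostar)"
    and viol: "\<And>s. 0 \<le> s \<Longrightarrow> s \<le> 1 \<Longrightarrow> D s \<Longrightarrow> (\<exists>t. prio t > prio rho \<and> violated T t (pl s, pr s, q s))"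
    and mono_pl: "\<And>x y. 0 \<le> x \<Longrightarrow> x \<le> y \<Longrightarrow> y \<le> 1 \<Longrightarrow> pl y \<le> pl x"
    and mono_pr: "\<And>x y. 0 \<le> x \<Longrightarrow> x \<le> y \<Longrightarrow> y \<le> 1 \<Longrightarrow> pr x \<le> pr y"
    and mono_q: "\<And>x y. 0 \<le> x \<Longrightarrow> x \<le> y \<Longrightarrow> y \<le> 1 \<Longrightarrow> q x \<le> q y"
    and T_nonneg: "\<And>t. 0 \<le> T t"
    and ostar_range: "0 \<le> ostar" "ostar \<le> 1"
    and push: "pushing T rho (pl ostar, pr ostar, q ostar)"
  shows "\<exists>t. prio t > prio rho \<and> dir t \<noteq> dir rho \<and>
              T t = ereal (qty t (pl ostar, pr ostar, q ostar))"
proof (rule ccontr)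
  assume nc: "\<not> ?thesis"
  have notv: "\<not> violated T t (pl ostar, pr ostar, q ostar)" if "prio t > prio rho" for t
    using push that unfolding pushing_def by force
  have each: "eventually (\<lambda>s. \<not> violated T t (pl s, pr s, q s)) F"
    if pt: "prio t > prio rho" for t
  proof (cases "T t = ereal (qty t (pl ostar, pr ostar, q ostar))")
    case False
    have tt: "((\<lambda>s. qty t (pl s, pr s, q s)) \<longlongrightarrow> qty t (pl ostar, pr ostar, q ostar)) F"
      using tpl tpr tq by (cases t) auto
    show ?thesis
    proof (cases "bnd t")
      case Lower
      have "\<not> ereal (qty t (pl ostar, pr ostar, q ostar)) < T t"
        using notv[OF pt] Lower by (simp add: violated_def)
      from ev_lower[OF tt False this T_nonneg] show ?thesis
        by (simp add: violated_def Lower)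
    next
      case Upper
      have "\<not> ereal (qty t (pl ostar, pr ostar, q ostar)) > T t"
        using notv[OF pt] Upper by (simp add: violated_def)
      from ev_upper[OF tt False this] show ?thesis
        by (simp add: violated_def Upper)
    qed
  next
    case True
    with nc pt have dt: "dir t = dir rho" by auto
    from evD show ?thesis
    proof eventually_elim
      case (elim s)
      then have s: "0 \<le> s" "s \<le> 1" "D s" by auto
      note dd = Ddir[OF s(3)]
      show ?case
      proof (cases t)
        case PlMin
        then have "s \<le> ostar" using dd dt by auto
        then show ?thesis using True PlMin mono_pl[of s ostar] s ostar_range
          by (simp add: violated_def)
      next
        case PrMax
        then have "s \<le> ostar" using dd dt by auto
        then show ?thesis using True PrMax mono_pr[of s ostar] s ostar_range
          by (simp add: violated_def)
      next
        case QMax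
        then have "s \<le> ostar" using dd dt by auto
        then show ?thesis using True QMax mono_q[of s ostar] s ostar_range
          by (simp add: violated_def)
      next
        case PlMax
        then have "ostar \<le> s" using dd dt by auto
        then show ?thesis using True PlMax mono_pl[of ostar s] s ostar_range
          by (simp add: violated_def)
      next
        case PrMin
        then have "ostar \<le> s" using dd dt by auto
        then show ?thesis using True PrMin mono_pr[of ostar s] s ostar_range
          by (simp add: violated_def)
      next
        case QMin
        then show ?thesis using pt by (cases rho) auto
      qed
    qed
  qed
  have allt: "eventually (\<lambda>s. \<forall>t. prio t > prio rho \<longrightarrow> \<not> violated T t (pl s, pr s, q s)) F"
  proof -
    have e: "eventually (\<lambda>s. prio t > prio rho \<longrightarrow> \<not> violated T t (pl s, pr s, q s)) F" for t
      using each[of t] by (cases "prio t > prio rho") auto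
    have "eventually (\<lambda>s. (prio PlMin > prio rho \<longrightarrow> \<not> violated T PlMin (pl s, pr s, q s))
       \<and> (prio PrMax > prio rho \<longrightarrow> \<not> violated T PrMax (pl s, pr s, q s))
       \<and> (prio PlMax > prio rho \<longrightarrow> \<not> violated T PlMax (pl s, pr s, q s))
       \<and> (prio PrMin > prio rho \<longrightarrow> \<not> violated T PrMin (pl s, pr s, q s))
       \<and> (prio QMax > prio rho \<longrightarrow> \<not> violated T QMax (pl s, pr s, q s))
       \<and> (prio QMin > prio rho \<longrightarrow> \<not> violated T QMin (pl s, pr s, q s))) F"
      by (intro eventually_conj e)
    then show ?thesis
      apply eventually_elim
      apply (intro allI)
      subgoal for s t by (cases t) auto
      done
  qed
  have "eventually (\<lambda>s. False) F"
    using allt evD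
  proof eventually_elim
    case (elim s)
    then show ?case using viol[of s] by blast
  qed
  with F show False by (simp add: eventually_False)
qed

theorem theorem1:
  fixes pl pr q :: "real \<Rightarrow> real" and T :: "target \<Rightarrow> ereal"
    and ostar :: real and rho :: target
  assumes cont_pl: "continuous_on {0..1} pl"
    and cont_pr: "continuous_on {0..1} pr"
    and cont_q: "continuous_on {0..1} q"
    and mono_pl: "\<And>x y. 0 \<le> x \<Longrightarrow> x \<le> y \<Longrightarrow> y \<le> 1 \<Longrightarrow> pl y \<le> pl x"
    and mono_pr: "\<And>x y. 0 \<le> x \<Longrightarrow> x \<le> y \<Longrightarrow> y \<le> 1 \<Longrightarrow> pr x \<le> pr y"
    and mono_q: "\<And>x y. 0 \<le> x \<Longrightarrow> x \<le> y \<Longrightarrow> y \<le> 1 \<Longrightarrow> q x \<le> q y"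
    and T_nonneg: "\<And>t. 0 \<le> T t"
    and qmin_viol: "\<And>s. 0 \<le> s \<Longrightarrow> s \<le> 1 \<Longrightarrow> violated T QMin (pl s, pr s, q s)"
    and ostar_range: "0 \<le> ostar" "ostar \<le> 1"
    and push: "pushing T rho (pl ostar, pr ostar, q ostar)"
    and adjusted:
      "(dir rho = Opening \<and> ostar = 1) \<or> (dir rho = Closing \<and> ostar = 0) \<or>
       (\<forall>s'. ((dir rho = Opening \<and> ostar < s' \<and> s' \<le> 1) \<or>
              (dir rho = Closing \<and> 0 \<le> s' \<and> s' < ostar)) \<longrightarrow>
            (\<exists>t. prio t > prio rho \<and> violated T t (pl s', pr s', q s')))"
  shows "(\<exists>t. prio t > prio rho \<and> dir t \<noteq> dir rho \<and>
              T t = ereal (qty t (pl ostar, pr ostar, q ostar)))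
         \<or> (ostar = 1 \<and> dir rho = Opening)
         \<or> (ostar = 0 \<and> dir rho = Closing)"
proof -
  have tl: "(f \<longlongrightarrow> f ostar) (at ostar within {0..1})" if "continuous_on {0..1} f" for f :: "real \<Rightarrow> real"
    using that ostar_range by (simp add: continuous_on_def)
  consider "dir rho = Opening \<and> ostar = 1" | "dir rho = Closing \<and> ostar = 0"
    | "\<not> (dir rho = Opening \<and> ostar = 1)" "\<not> (dir rho = Closing \<and> ostar = 0)" by blast
  then show ?thesis
  proof cases
    case 3
    with adjusted have adj: "\<And>s'. ((dir rho = Opening \<and> ostar < s' \<and> s' \<le> 1) \<or>
              (dir rho = Closing \<and> 0 \<le> s' \<and> s' < ostar)) \<Longrightarrow>
            (\<exists>t. prio t > prio rho \<and> violated T t (pl s', pr s', q s'))" by blast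
    show ?thesis
    proof (cases "dir rho")
      case Opening
      with 3 ostar_range have lt: "ostar < 1" by auto
      have tr: "(f \<longlongrightarrow> f ostar) (at_right ostar)" if "continuous_on {0..1} f" for f :: "real \<Rightarrow> real"
      proof -
        have "(f \<longlongrightarrow> f ostar) (at ostar within {ostar..1})"
          by (rule tendsto_within_subset[OF tl[OF that]]) (use ostar_range in auto)
        then show ?thesis using at_within_Icc_at_right[OF lt] by simp
      qed
      have "\<exists>t. prio t > prio rho \<and> dir t \<noteq> dir rho \<and>
              T t = ereal (qty t (pl ostar, pr ostar, q ostar))"
        apply (rule core[where F="at_right ostar" and D="\<lambda>s. ostar < s", OF _ tr[OF cont_pl] tr[OF cont_pr] tr[OF cont_q] _ _ _ mono_pl mono_pr mono_q T_nonneg ostar_range push])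
        subgoal by simp
        subgoal using eventually_at_right_real[OF lt] by eventually_elim (use ostar_range in auto)
        subgoal using Opening by auto
        subgoal using adj Opening by auto
        by auto
      then show ?thesis by blast
    next
      case Closing
      with 3 ostar_range have lt: "0 < ostar" by auto
      have tr: "(f \<longlongrightarrow> f ostar) (at_left ostar)" if "continuous_on {0..1} f" for f :: "real \<Rightarrow> real"
      proof -
        have "(f \<longlongrightarrow> f ostar) (at ostar within {0..ostar})"
          by (rule tendsto_within_subset[OF tl[OF that]]) (use ostar_range in auto)
        then show ?thesis using at_within_Icc_at_left[OF lt] by simp
      qed
      have "\<exists>t. prio t > prio rho \<and> dir t \<noteq> dir rho \<and>
              T t = ereal (qty t (pl ostar, pr ostar, q ostar))"
        apply (rule core[where F="at_left ostar" and D="\<lambda>s. s < ostar", OF _ tr[OF cont_pl] tr[OF cont_pr] tr[OF cont_q] _ _ _ mono_pl mono_pr mono_q T_nonneg ostar_range push])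
        subgoal by simp
        subgoal using eventually_at_left_real[OF lt] by eventually_elim (use ostar_range in auto)
        subgoal using Closing by auto
        subgoal using adj Closing by auto
        by auto
      then show ?thesis by blast
    qed
  qed auto
qed

end
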